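(* Let $G=(V,E)$ be a split graph with a split partition $(C,I)$. Let $E_S$ be the set of strong edges in an optimal solution for MaxSTC on $G$ and let $I_W$ be the vertices of $I$ that are incident to at least one edge of $E_S$. \begin{enumerate} \item If every vertex of $I_W$ misses at least three vertices of $C$ in $G$ then $E_S = E(C)$. \item If every vertex of $I_W$ misses exactly one vertex of $C$ in $G$ then $|E_S| \leq |E(C)| + \lfloor\frac{|I_W|}{2}\rfloor$. \end{enumerate}
   Context: A strong-weak labeling of the edges of a graph $G$ assigns each edge the label strong or weak; it satisfies the strong triadic closure if for any two strong edges $\{u,v\}$ and $\{v,w\}$ the edge $\{u,w\}$ exists in $G$. MaxSTC is the problem of finding a strong-weak labeling satisfying the strong triadic closure with the maximum number of strong edges. A split graph is a graph whose vertex set can be partitioned into a clique $C$ and an independent set $I$ (a split partition $(C,I)$). A vertex $u$ misses a vertex $v$ if $\{u,v\}\notin E(G)$. $E(C)$ denotes the set of edges with both endpoints in $C$. *)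

theory Defs
  imports Main
begin

definition simple_graph :: "'a set \<Rightarrow> 'a set set \<Rightarrow> bool" where
  "simple_graph V E \<longleftrightarrow> finite V \<and>
     (\<forall>e\<in>E. \<exists>u v. e = {u, v} \<and> u \<in> V \<and> v \<in> V \<and> u \<noteq> v)"

definition is_clique :: "'a set set \<Rightarrow> 'a set \<Rightarrow> bool" where
  "is_clique E C \<longleftrightarrow> (\<forall>u\<in>C. \<forall>v\<in>C. u \<noteq> v \<longrightarrow> {u, v} \<in> E)"

definition is_independent :: "'a set set \<Rightarrow> 'a set \<Rightarrow> bool" where
  "is_independent E I \<longleftrightarrow> (\<forall>u\<in>I. \<forall>v\<in>I. {u, v} \<notin> E)"

definition split_partition :: "'a set \<Rightarrow> 'a set set \<Rightarrow> 'a set \<Rightarrow> 'a set \<Rightarrow> bool" where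
  "split_partition V E C I \<longleftrightarrow> C \<union> I = V \<and> C \<inter> I = {} \<and> is_clique E C \<and> is_independent E I"

text \<open>A strong-weak labeling is identified with its set S of strong edges (S \<subseteq> E).
  It satisfies the strong triadic closure if any two (distinct) strong edges {u,v},{v,w}
  have {u,w} \<in> E.\<close>
definition stc :: "'a set set \<Rightarrow> 'a set set \<Rightarrow> bool" where
  "stc E S \<longleftrightarrow> S \<subseteq> E \<and>
     (\<forall>u v w. {u, v} \<in> S \<and> {v, w} \<in> S \<and> u \<noteq> w \<longrightarrow> {u, w} \<in> E)"

definition maxstc_optimal :: "'a set set \<Rightarrow> 'a set set \<Rightarrow> bool" where
  "maxstc_optimal E S \<longleftrightarrow> stc E S \<and> (\<forall>S'. stc E S' \<longrightarrow> card S' \<le> card S)"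

definition misses :: "'a set set \<Rightarrow> 'a \<Rightarrow> 'a \<Rightarrow> bool" where
  "misses E u v \<longleftrightarrow> {u, v} \<notin> E"

definition edges_within :: "'a set set \<Rightarrow> 'a set \<Rightarrow> 'a set set" where
  "edges_within E C = {e \<in> E. e \<subseteq> C}"

definition incident_vertices :: "'a set \<Rightarrow> 'a set set \<Rightarrow> 'a set" where
  "incident_vertices I S = {x \<in> I. \<exists>e\<in>S. x \<in> e}"

end

theory Submission
  imports Defs
begin

theorem lemma2:
  fixes V C I :: "'a set" and E ES :: "'a set set"
  assumes "simple_graph V E"
    and "split_partition V E C I"
    and "maxstc_optimal E ES"
  shows "((\<forall>x\<in>incident_vertices I ES. card {c \<in> C. misses E x c} \<ge> 3)
            \<longrightarrow> ES = edges_within E C)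
       \<and> ((\<forall>x\<in>incident_vertices I ES. card {c \<in> C. misses E x c} = 1)
            \<longrightarrow> card ES \<le> card (edges_within E C) + card (incident_vertices I ES) div 2)"
proof -
  define S where "S = ES"
  define EC where "EC = edges_within E C"
  define IW where "IW = incident_vertices I ES"
  have finV: "finite V" and edg: "\<And>e. e \<in> E \<Longrightarrow> \<exists>u v. e = {u, v} \<and> u \<in> V \<and> v \<in> V \<and> u \<noteq> v"
    using assms(1) unfolding simple_graph_def by blast+
  have VCI: "V = C \<union> I" and CI: "C \<inter> I = {}" and cl: "\<And>u v. u \<in> C \<Longrightarrow> v \<in> C \<Longrightarrow> u \<noteq> v \<Longrightarrow> {u,v} \<in> E"
    and ind: "\<And>u v. u \<in> I \<Longrightarrow> v \<in> I \<Longrightarrow> {u,v} \<notin> E"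
    using assms(2) unfolding split_partition_def is_clique_def is_independent_def by blast+
  have SE: "S \<subseteq> E" and clo: "\<And>u v w. {u, v} \<in> S \<Longrightarrow> {v, w} \<in> S \<Longrightarrow> u \<noteq> w \<Longrightarrow> {u, w} \<in> E"
    and opt: "\<And>S'. stc E S' \<Longrightarrow> card S' \<le> card S"
    using assms(3) unfolding maxstc_optimal_def stc_def S_def by blast+
  have finE: "finite E"
  proof -
    have "E \<subseteq> Pow V"
    proof
      fix e assume "e \<in> E"
      then obtain u v where "e = {u,v}" "u \<in> V" "v \<in> V" using edg by meson
      then show "e \<in> Pow V" by simp
    qed
    then show ?thesis using finV by (meson finite_Pow_iff finite_subset)
  qed
  have finS: "finite S" using SE finE by (rule finite_subset)
  have finEC: "finite EC" unfolding EC_def edges_within_def using finE by simp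
  have finI: "finite I" using finV unfolding VCI by simp
  have finC: "finite C" using finV unfolding VCI by simp
  have uniq: "x = y" if "c \<in> C" "x \<in> I" "y \<in> I" "{x,c} \<in> S" "{y,c} \<in> S" for x y c
  proof (rule ccontr)
    assume "x \<noteq> y"
    moreover have "{c,y} \<in> S" using that by (simp add: insert_commute)
    ultimately have "{x,y} \<in> E" using clo that by blast
    then show False using ind that by blast
  qed
  have weak: "{c,m} \<notin> S" if "x \<in> I" "c \<in> C" "{x,c} \<in> S" "m \<in> C" "{x,m} \<notin> E" for x c m
  proof
    assume "{c,m} \<in> S"
    moreover have "x \<noteq> m" using that CI by blast
    ultimately show False using clo that by blast
  qed
  define T where "T = S - EC"
  have tform: "\<exists>x c. x \<in> I \<and> c \<in> C \<and> t = {x,c}" if "t \<in> T" for t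
  proof -
    have tE: "t \<in> E" "t \<notin> EC" using that SE T_def by auto
    then obtain u v where uv: "t = {u,v}" "u \<in> V" "v \<in> V" using edg by blast
    show ?thesis
    proof (cases "u \<in> C")
      case True
      then have "v \<notin> C" using tE uv unfolding EC_def edges_within_def by auto
      then show ?thesis using True uv VCI by (auto simp: insert_commute)
    next
      case False
      then have "u \<in> I" using uv VCI by auto
      then have "v \<notin> I" using ind tE uv by blast
      then show ?thesis using \<open>u \<in> I\<close> uv VCI by auto
    qed
  qed
  define Cs where "Cs = {c \<in> C. \<exists>x\<in>I. {x,c} \<in> S}"
  define xof where "xof c = (THE x. x \<in> I \<and> {x,c} \<in> S)" for c
  have xof_eq: "xof c = x" if "x \<in> I" "c \<in> C" "{x,c} \<in> S" for x c
    unfolding xof_def using that uniq by (intro the_equality) auto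
  have xof_prop: "xof c \<in> I \<and> {xof c, c} \<in> S" if "c \<in> Cs" for c
    using that xof_eq unfolding Cs_def by auto
  have xof_IW: "xof c \<in> IW" if "c \<in> Cs" for c
    using xof_prop[OF that] unfolding IW_def incident_vertices_def S_def by blast
  have finCs: "finite Cs" using finC Cs_def by simp
  have cardT: "card T = card Cs"
  proof -
    have "T = (\<lambda>c. {xof c, c}) ` Cs"
    proof
      show "T \<subseteq> (\<lambda>c. {xof c, c}) ` Cs"
      proof
        fix t assume "t \<in> T"
        then obtain x c where xc: "x \<in> I" "c \<in> C" "t = {x,c}" using tform by blast
        then have "{x,c} \<in> S" using \<open>t \<in> T\<close> T_def by auto
        then show "t \<in> (\<lambda>c. {xof c, c}) ` Cs" using xc xof_eq unfolding Cs_def by auto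
      qed
      show "(\<lambda>c. {xof c, c}) ` Cs \<subseteq> T"
      proof
        fix t assume "t \<in> (\<lambda>c. {xof c, c}) ` Cs"
        then obtain c where c: "c \<in> Cs" "t = {xof c, c}" by blast
        then have "xof c \<notin> C" using xof_prop CI by blast
        then show "t \<in> T" using c xof_prop unfolding T_def EC_def edges_within_def by auto
      qed
    qed
    moreover have "inj_on (\<lambda>c. {xof c, c}) Cs"
    proof (rule inj_onI)
      fix a b assume ab: "a \<in> Cs" "b \<in> Cs" "{xof a, a} = {xof b, b}"
      have "xof a \<notin> C" "xof b \<notin> C" using ab xof_prop CI by blast+
      moreover have "a \<in> C" "b \<in> C" using ab Cs_def by auto
      ultimately show "a = b" using ab(3) by (metis doubleton_eq_iff)
    qed
    ultimately show ?thesis using card_image by blast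
  qed
  have cardS: "card S = card (S \<inter> EC) + card T"
  proof -
    have "S = (S \<inter> EC) \<union> T" "(S \<inter> EC) \<inter> T = {}" unfolding T_def by auto
    then show ?thesis using finS by (metis card_Un_disjoint finite_Diff finite_Int T_def)
  qed
  define W where "W = EC - S"
  have finW: "finite W" using finEC W_def by simp
  have cardEC: "card EC = card (S \<inter> EC) + card W"
  proof -
    have "EC = (S \<inter> EC) \<union> W" "(S \<inter> EC) \<inter> W = {}" unfolding W_def by auto
    then show ?thesis using finEC by (metis card_Un_disjoint finite_Diff finite_Int W_def)
  qed
  have xof_adj: "{xof c, c} \<in> E" if "c \<in> Cs" for c using xof_prop[OF that] SE by blast
  have inW: "{c, m} \<in> W" if "c \<in> Cs" "m \<in> C" "{xof c, m} \<notin> E" for c m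
  proof -
    have "c \<in> C" using that Cs_def by auto
    have "c \<noteq> m" using that xof_adj by blast
    then have "{c,m} \<in> E" using cl \<open>c \<in> C\<close> that by blast
    moreover have "{c,m} \<notin> S" using weak xof_prop[OF that(1)] \<open>c \<in> C\<close> that by blast
    ultimately show ?thesis using \<open>c \<in> C\<close> that unfolding W_def EC_def edges_within_def by auto
  qed
  define M where "M c = {m \<in> C. {xof c, m} \<notin> E}" for c
  have M_eq: "M c = {m \<in> C. misses E (xof c) m}" for c unfolding M_def misses_def by simp
  have finT: "finite T" using finS T_def by simp
  have stcEC: "stc E EC"
    unfolding stc_def
  proof (intro conjI allI impI)
    show "EC \<subseteq> E" unfolding EC_def edges_within_def by blast
    fix u v w assume a: "{u, v} \<in> EC \<and> {v, w} \<in> EC \<and> u \<noteq> w"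
    then have "u \<in> C" "w \<in> C" unfolding EC_def edges_within_def by auto
    then show "{u, w} \<in> E" using cl a by blast
  qed
  have part1: "(\<forall>x\<in>IW. card {c \<in> C. misses E x c} \<ge> 3) \<longrightarrow> S = EC"
  proof
    assume H: "\<forall>x\<in>IW. card {c \<in> C. misses E x c} \<ge> 3"
    have "T = {}"
    proof (rule ccontr)
      assume "T \<noteq> {}"
      then have pos: "card Cs > 0" using cardT finT by (metis card_gt_0_iff)
      have finM: "\<forall>c\<in>Cs. finite (M c)" unfolding M_def using finC by simp
      have cs: "card (Sigma Cs M) = (\<Sum>c\<in>Cs. card (M c))" using finCs finM by (rule card_SigmaI)
      have "of_nat (card Cs) * (3::nat) \<le> (\<Sum>c\<in>Cs. card (M c))"
        by (rule sum_bounded_below) (use H xof_IW M_eq in auto)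
      then have b1: "3 * card Cs \<le> card (Sigma Cs M)" using cs by simp
      define DW where "DW = {(a,b). a \<noteq> b \<and> {a,b} \<in> W}"
      define P where "P w = {(a,b). a \<noteq> b \<and> {a,b} = w}" for w :: "'a set"
      have DWU: "DW = (\<Union>w\<in>W. P w)" unfolding DW_def P_def by auto
      have Pfin: "finite (P w) \<and> card (P w) \<le> 2" if "w \<in> W" for w
      proof -
        have "w \<in> E" using that W_def EC_def edges_within_def by auto
        then obtain u v where w: "w = {u,v}" using edg by meson
        have "P w \<subseteq> {(u,v),(v,u)}" unfolding P_def w by (auto simp: doubleton_eq_iff)
        moreover have "card {(u,v),(v,u)} \<le> 2" by (simp add: card_insert_le_m1)
        ultimately show ?thesis by (meson card_mono finite.emptyI finite.insertI le_trans finite_subset)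
      qed
      have "card DW \<le> (\<Sum>w\<in>W. card (P w))" unfolding DWU using finW by (rule card_UN_le)
      also have "\<dots> \<le> (\<Sum>w\<in>W. 2)" using Pfin by (intro sum_mono) auto
      finally have b2: "card DW \<le> 2 * card W" by simp
      have finDW: "finite DW" unfolding DWU using finW Pfin by blast
      have "Sigma Cs M \<subseteq> DW"
      proof
        fix p assume "p \<in> Sigma Cs M"
        then obtain c m where p: "p = (c,m)" "c \<in> Cs" "m \<in> C" "{xof c, m} \<notin> E" unfolding M_def by blast
        have "c \<noteq> m" using p xof_adj by blast
        then show "p \<in> DW" using inW p unfolding DW_def by blast
      qed
      then have "card (Sigma Cs M) \<le> card DW" using finDW by (rule card_mono[rotated])
      then have "card T < card W" using b1 b2 pos cardT by linarith
      then have "card S < card EC" using cardS cardEC by linarith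
      moreover have "card EC \<le> card S" using opt stcEC by blast
      ultimately show False by linarith
    qed
    then have "S \<subseteq> EC" unfolding T_def by blast
    moreover have "card EC \<le> card S" using opt stcEC by blast
    ultimately show "S = EC" using finEC by (metis card_seteq)
  qed
  have part2: "(\<forall>x\<in>IW. card {c \<in> C. misses E x c} = 1) \<longrightarrow> card S \<le> card EC + card IW div 2"
  proof
    assume H: "\<forall>x\<in>IW. card {c \<in> C. misses E x c} = 1"
    define mo where "mo c = the_elem (M c)" for c
    have Mmo: "M c = {mo c}" if "c \<in> Cs" for c
    proof -
      have "card (M c) = 1" using H xof_IW[OF that] M_eq by simp
      then obtain m where "M c = {m}" by (meson card_1_singletonE)
      then show ?thesis unfolding mo_def by simp
    qed
    have mo1: "mo c \<in> C" "{xof c, mo c} \<notin> E" if "c \<in> Cs" for c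
      using Mmo[OF that] unfolding M_def by auto
    have mo2: "mo c \<noteq> c" if "c \<in> Cs" for c using mo1[OF that] xof_adj[OF that] by auto
    define phi where "phi c = {c, mo c}" for c
    have phiW: "phi ` Cs \<subseteq> W" unfolding phi_def using inW mo1 by blast
    define Coll where "Coll = {c \<in> Cs. \<exists>c'\<in>Cs. c' \<noteq> c \<and> phi c' = phi c}"
    have collP: "mo c \<in> Cs \<and> mo (mo c) = c \<and> phi (mo c) = phi c" if cC: "c \<in> Coll" for c
    proof -
      obtain c' where c': "c \<in> Cs" "c' \<in> Cs" "c' \<noteq> c" "{c', mo c'} = {c, mo c}"
        using cC unfolding Coll_def phi_def by blast
      then have "c' = mo c" "mo c' = c" by (auto simp: doubleton_eq_iff)
      then show ?thesis using c' unfolding phi_def by (auto simp: insert_commute)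
    qed
    have collmo: "mo c \<in> Coll" if "c \<in> Coll" for c
    proof -
      have "c \<in> Cs" using that unfolding Coll_def by blast
      then have "c \<in> Cs \<and> c \<noteq> mo c \<and> phi c = phi (mo c)" using collP[OF that] mo2 by metis
      then show ?thesis using collP[OF that] unfolding Coll_def by blast
    qed
    have CollCs: "Coll \<subseteq> Cs" unfolding Coll_def by blast
    have finColl: "finite Coll" using finCs CollCs finite_subset by blast
    define A1 where "A1 = Cs - Coll"
    have inj1: "inj_on phi A1"
    proof (rule inj_onI)
      fix a b assume "a \<in> A1" "b \<in> A1" "phi a = phi b"
      then show "a = b" unfolding A1_def Coll_def by blast
    qed
    have disj: "phi ` A1 \<inter> phi ` Coll = {}"
    proof (rule ccontr)
      assume "phi ` A1 \<inter> phi ` Coll \<noteq> {}"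
      then obtain a c where ac: "a \<in> A1" "c \<in> Coll" "phi a = phi c" by blast
      then have "a \<noteq> c" "a \<in> Cs" "c \<in> Cs" unfolding A1_def Coll_def by auto
      then have "a \<in> Coll" using ac(3) unfolding Coll_def by force
      then show False using ac(1) unfolding A1_def by blast
    qed
    have c1: "card Cs = card A1 + card Coll"
      unfolding A1_def using finCs CollCs by (metis card_Diff_subset card_mono le_add_diff_inverse2 finite_subset)
    have "phi ` Cs = phi ` A1 \<union> phi ` Coll" unfolding A1_def using CollCs by blast
    then have c2: "card (phi ` Cs) = card A1 + card (phi ` Coll)"
      using disj inj1 finCs finColl A1_def card_Un_disjoint card_image
      by (metis finite_Diff finite_imageI)
    have UC: "\<Union> (phi ` Coll) = Coll"
    proof
      show "\<Union> (phi ` Coll) \<subseteq> Coll" unfolding phi_def using collmo by auto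
      show "Coll \<subseteq> \<Union> (phi ` Coll)" unfolding phi_def by auto
    qed
    have pd: "pairwise disjnt (phi ` Coll)"
    proof (rule pairwiseI)
      fix w1 w2 assume w: "w1 \<in> phi ` Coll" "w2 \<in> phi ` Coll" "w1 \<noteq> w2"
      then obtain c1 c2 where c: "c1 \<in> Coll" "c2 \<in> Coll" "w1 = phi c1" "w2 = phi c2" by blast
      show "disjnt w1 w2"
      proof (rule ccontr)
        assume "\<not> disjnt w1 w2"
        then obtain d where d: "d \<in> phi c1" "d \<in> phi c2" using c unfolding disjnt_def by blast
        have "phi d = phi c1" using d(1) collP[OF c(1)] unfolding phi_def by auto
        moreover have "phi d = phi c2" using d(2) collP[OF c(2)] unfolding phi_def by auto
        ultimately show False using w c by simp
      qed
    qed
    have "card Coll = sum card (phi ` Coll)"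
    proof -
      have "card (\<Union> (phi ` Coll)) = sum card (phi ` Coll)"
        by (rule card_Union_disjoint[OF pd]) (auto simp: phi_def)
      then show ?thesis using UC by simp
    qed
    also have "\<dots> = (\<Sum>w\<in>phi ` Coll. 2)"
    proof (rule sum.cong)
      fix w assume "w \<in> phi ` Coll"
      then obtain c where "c \<in> Coll" "w = phi c" by blast
      moreover have "mo c \<noteq> c" using mo2 CollCs \<open>c \<in> Coll\<close> by blast
      ultimately show "card w = 2" unfolding phi_def by simp
    qed simp
    finally have c3: "card Coll = 2 * card (phi ` Coll)" by simp
    have injx: "inj_on xof Coll"
    proof (rule inj_onI)
      fix a b assume ab: "a \<in> Coll" "b \<in> Coll" "xof a = xof b"
      then have "M a = M b" unfolding M_def by simp
      then have "mo a = mo b" using Mmo ab CollCs by (metis in_mono singleton_inject)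
      then show "a = b" using collP ab by metis
    qed
    have "xof ` Coll \<subseteq> IW" using xof_IW CollCs by blast
    moreover have "finite IW" unfolding IW_def incident_vertices_def using finI by simp
    ultimately have "card (xof ` Coll) \<le> card IW" by (simp add: card_mono)
    then have c4: "card Coll \<le> card IW" using card_image[OF injx] by simp
    have "card (phi ` Cs) \<le> card W" using phiW finW by (simp add: card_mono)
    then have "card T \<le> card W + card IW div 2" using c1 c2 c3 c4 cardT by linarith
    then show "card S \<le> card EC + card IW div 2" using cardS cardEC by linarith
  qed
  show ?thesis using part1 part2 unfolding S_def EC_def IW_def by blast
qed

end
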